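(* Let $(K,R,V)$ be a finite transitive Kripke tree with clusters, $A$ a modal formula, and $t$ a translation for $A$ based on a sequence $Q=\{q_i\}_{i=0}^\infty$ of atoms not occurring in $A$. Then there is a finite transitive irreflexive Kripke model $(K',R',V')$ such that for every node $k\in K$ there is a node $k'\in K'$ such that if $k\vDash A$ then $k'\vDash A^t$.
   Context: Modal formulas are built from atoms and $\bot$ using $\wedge,\vee,\to,\neg,\Box$. A finite transitive Kripke tree with clusters is a finite Kripke model with transitive accessibility relation $R$ whose clusters (maximal sets of mutually accessible nodes, or single irreflexive nodes) are ordered by $R$ as a tree; each cluster is either a single irreflexive node or a set of reflexive nodes. A translation $t$ for $A$ based on $Q$ is an assignment of natural numbers to the occurrences of $\Box$ in $A$ such that the number assigned to any box occurrence is greater than the numbers assigned to all box occurrences within its scope. $A^t$ is defined by: $p^t=p$ for atoms; $(B\circ C)^t=B^t\circ C^t$ for $\circ\in\{\wedge,\vee,\to\}$; $(\neg B)^t=\neg B^t$; $(\Box B)^t=\Box(\bigwedge_{i=0}^n q_i\to B^t)$ where $n$ is the number $t$ assigns to that box occurrence. *)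

theory Defs
  imports Main
begin

datatype 'a fm =
    Atom 'a
  | Bot
  | Conj "'a fm" "'a fm"
  | Disj "'a fm" "'a fm"
  | Imp "'a fm" "'a fm"
  | Neg "'a fm"
  | Box "'a fm"

fun atoms :: "'a fm \<Rightarrow> 'a set" where
  "atoms (Atom p) = {p}"
| "atoms Bot = {}"
| "atoms (Conj B C) = atoms B \<union> atoms C"
| "atoms (Disj B C) = atoms B \<union> atoms C"
| "atoms (Imp B C) = atoms B \<union> atoms C"
| "atoms (Neg B) = atoms B"
| "atoms (Box B) = atoms B"

text \<open>A translation t for A is represented as a copy of A in which every
  box occurrence carries the natural number assigned to it.\<close>

datatype 'a afm =
    AAtom 'a
  | ABot
  | AConj "'a afm" "'a afm"
  | ADisj "'a afm" "'a afm"
  | AImp "'a afm" "'a afm"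
  | ANeg "'a afm"
  | ABox nat "'a afm"

fun erase :: "'a afm \<Rightarrow> 'a fm" where
  "erase (AAtom p) = Atom p"
| "erase ABot = Bot"
| "erase (AConj B C) = Conj (erase B) (erase C)"
| "erase (ADisj B C) = Disj (erase B) (erase C)"
| "erase (AImp B C) = Imp (erase B) (erase C)"
| "erase (ANeg B) = Neg (erase B)"
| "erase (ABox n B) = Box (erase B)"

fun boxnums :: "'a afm \<Rightarrow> nat set" where
  "boxnums (AAtom p) = {}"
| "boxnums ABot = {}"
| "boxnums (AConj B C) = boxnums B \<union> boxnums C"
| "boxnums (ADisj B C) = boxnums B \<union> boxnums C"
| "boxnums (AImp B C) = boxnums B \<union> boxnums C"
| "boxnums (ANeg B) = boxnums B"
| "boxnums (ABox n B) = insert n (boxnums B)"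

fun admissible :: "'a afm \<Rightarrow> bool" where
  "admissible (AAtom p) = True"
| "admissible ABot = True"
| "admissible (AConj B C) = (admissible B \<and> admissible C)"
| "admissible (ADisj B C) = (admissible B \<and> admissible C)"
| "admissible (AImp B C) = (admissible B \<and> admissible C)"
| "admissible (ANeg B) = admissible B"
| "admissible (ABox n B) = (admissible B \<and> (\<forall>m\<in>boxnums B. m < n))"

definition is_translation :: "'a afm \<Rightarrow> 'a fm \<Rightarrow> bool" where
  "is_translation t A \<longleftrightarrow> erase t = A \<and> admissible t"

fun bigconj :: "(nat \<Rightarrow> 'a) \<Rightarrow> nat \<Rightarrow> 'a fm" where
  "bigconj q 0 = Atom (q 0)"
| "bigconj q (Suc n) = Conj (bigconj q n) (Atom (q (Suc n)))"

fun translate :: "(nat \<Rightarrow> 'a) \<Rightarrow> 'a afm \<Rightarrow> 'a fm" where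
  "translate q (AAtom p) = Atom p"
| "translate q ABot = Bot"
| "translate q (AConj B C) = Conj (translate q B) (translate q C)"
| "translate q (ADisj B C) = Disj (translate q B) (translate q C)"
| "translate q (AImp B C) = Imp (translate q B) (translate q C)"
| "translate q (ANeg B) = Neg (translate q B)"
| "translate q (ABox n B) = Box (Imp (bigconj q n) (translate q B))"

fun sat :: "'w set \<Rightarrow> ('w \<Rightarrow> 'w \<Rightarrow> bool) \<Rightarrow> ('w \<Rightarrow> 'a \<Rightarrow> bool) \<Rightarrow> 'w \<Rightarrow> 'a fm \<Rightarrow> bool" where
  "sat K R V k (Atom p) = V k p"
| "sat K R V k Bot = False"
| "sat K R V k (Conj B C) = (sat K R V k B \<and> sat K R V k C)"
| "sat K R V k (Disj B C) = (sat K R V k B \<or> sat K R V k C)"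
| "sat K R V k (Imp B C) = (sat K R V k B \<longrightarrow> sat K R V k C)"
| "sat K R V k (Neg B) = (\<not> sat K R V k B)"
| "sat K R V k (Box B) = (\<forall>j\<in>K. R k j \<longrightarrow> sat K R V j B)"

definition transitive_on :: "'w set \<Rightarrow> ('w \<Rightarrow> 'w \<Rightarrow> bool) \<Rightarrow> bool" where
  "transitive_on K R \<longleftrightarrow> (\<forall>x\<in>K. \<forall>y\<in>K. \<forall>z\<in>K. R x y \<longrightarrow> R y z \<longrightarrow> R x z)"

text \<open>The clusters (maximal sets
  of mutually accessible nodes, or single irreflexive nodes) are determined by R;
  by transitivity every non-singleton cluster consists of reflexive nodes.
  The clusters form a tree: there is a root cluster (containing r) from which all
  other nodes are accessible, and the strict predecessors of every node
  (nodes j with R j k but not R k j) are linearly ordered by R.\<close>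
definition kripke_tree_clusters :: "'w set \<Rightarrow> ('w \<Rightarrow> 'w \<Rightarrow> bool) \<Rightarrow> bool" where
  "kripke_tree_clusters K R \<longleftrightarrow>
     finite K \<and> K \<noteq> {} \<and>
     (\<forall>x y. R x y \<longrightarrow> x \<in> K \<and> y \<in> K) \<and>
     transitive_on K R \<and>
     (\<exists>r\<in>K. \<forall>k\<in>K. k \<noteq> r \<longrightarrow> R r k) \<and>
     (\<forall>k\<in>K. \<forall>j1\<in>K. \<forall>j2\<in>K.
        R j1 k \<and> \<not> R k j1 \<and> R j2 k \<and> \<not> R k j2 \<longrightarrow> R j1 j2 \<or> R j2 j1 \<or> j1 = j2)"

definition finite_trans_irrefl :: "'w set \<Rightarrow> ('w \<Rightarrow> 'w \<Rightarrow> bool) \<Rightarrow> bool" where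
  "finite_trans_irrefl K R \<longleftrightarrow>
     finite K \<and> transitive_on K R \<and> (\<forall>x\<in>K. \<not> R x x)"

end

theory Submission
  imports Defs
begin

lemma transfer_sat:
  fixes K' :: "'b set" and f :: "'b \<Rightarrow> nat"
  assumes inj: "inj_on f K'" and a: "a \<in> K'"
  shows "sat (f ` K') (\<lambda>x y. \<exists>u\<in>K'. \<exists>v\<in>K'. x = f u \<and> y = f v \<and> R' u v)
             (\<lambda>x. V' (inv_into K' f x)) (f a) F = sat K' R' V' a F"
  using a
proof (induction F arbitrary: a)
  case (Atom p)
  then show ?case using inj by simp
next
  case (Box F)
  show ?case
  proof
    assume H: "sat (f ` K') (\<lambda>x y. \<exists>u\<in>K'. \<exists>v\<in>K'. x = f u \<and> y = f v \<and> R' u v)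
             (\<lambda>x. V' (inv_into K' f x)) (f a) (Box F)"
    show "sat K' R' V' a (Box F)"
    proof (simp, intro ballI impI)
      fix j assume j: "j \<in> K'" "R' a j"
      have "f j \<in> f ` K'" using j by simp
      moreover have "\<exists>u\<in>K'. \<exists>v\<in>K'. f a = f u \<and> f j = f v \<and> R' u v"
        using j Box.prems by blast
      ultimately have "sat (f ` K') (\<lambda>x y. \<exists>u\<in>K'. \<exists>v\<in>K'. x = f u \<and> y = f v \<and> R' u v)
             (\<lambda>x. V' (inv_into K' f x)) (f j) F" using H by (simp only: sat.simps; blast)
      then show "sat K' R' V' j F" using Box.IH[OF j(1)] by simp
    qed
  next
    assume H: "sat K' R' V' a (Box F)"
    show "sat (f ` K') (\<lambda>x y. \<exists>u\<in>K'. \<exists>v\<in>K'. x = f u \<and> y = f v \<and> R' u v)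
             (\<lambda>x. V' (inv_into K' f x)) (f a) (Box F)"
    proof (simp only: sat.simps, intro ballI impI)
      fix x assume x: "x \<in> f ` K'"
        "\<exists>u\<in>K'. \<exists>v\<in>K'. f a = f u \<and> x = f v \<and> R' u v"
      then obtain u v where uv: "u \<in> K'" "v \<in> K'" "f a = f u" "x = f v" "R' u v" by blast
      have "u = a" using inj uv(1,3) Box.prems by (metis inj_onD)
      then have "sat K' R' V' v F" using H uv by simp
      then show "sat (f ` K') (\<lambda>x y. \<exists>u\<in>K'. \<exists>v\<in>K'. x = f u \<and> y = f v \<and> R' u v)
             (\<lambda>x. V' (inv_into K' f x)) x F" using Box.IH[OF uv(2)] uv(4) by simp
    qed
  qed
qed auto

lemma transfer_model:
  fixes K' :: "'b set"
  assumes "finite_trans_irrefl K' R'"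
  shows "\<exists>(K2 :: nat set) R2 V2 f. finite_trans_irrefl K2 R2 \<and> f ` K' = K2 \<and>
           (\<forall>a\<in>K'. \<forall>F. sat K2 R2 V2 (f a) F = sat K' R' V' a F)"
proof -
  have fin: "finite K'" using assms by (simp add: finite_trans_irrefl_def)
  obtain f :: "'b \<Rightarrow> nat" and n where f: "f ` K' = {i. i < n}" "inj_on f K'"
    using finite_imp_inj_to_nat_seg[OF fin] by blast
  let ?R2 = "\<lambda>x y. \<exists>u\<in>K'. \<exists>v\<in>K'. x = f u \<and> y = f v \<and> R' u v"
  have "finite_trans_irrefl (f ` K') ?R2"
    unfolding finite_trans_irrefl_def transitive_on_def
  proof (intro conjI ballI impI)
    show "finite (f ` K')" using fin by simp
  next
    fix x y z assume xyz: "x \<in> f ` K'" "y \<in> f ` K'" "z \<in> f ` K'"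
      and a: "\<exists>u\<in>K'. \<exists>v\<in>K'. x = f u \<and> y = f v \<and> R' u v"
      and b: "\<exists>u\<in>K'. \<exists>v\<in>K'. y = f u \<and> z = f v \<and> R' u v"
    obtain u1 v1 where 1: "u1 \<in> K'" "v1 \<in> K'" "x = f u1" "y = f v1" "R' u1 v1" using a by blast
    obtain u2 v2 where 2: "u2 \<in> K'" "v2 \<in> K'" "y = f u2" "z = f v2" "R' u2 v2" using b by blast
    have "v1 = u2" using 1 2 f(2) by (metis inj_onD)
    then have "R' u1 v2" using 1 2 assms unfolding finite_trans_irrefl_def transitive_on_def by blast
    then show "\<exists>u\<in>K'. \<exists>v\<in>K'. x = f u \<and> z = f v \<and> R' u v" using 1 2 by blast
  next
    fix x assume "x \<in> f ` K'"
    show "\<not> (\<exists>u\<in>K'. \<exists>v\<in>K'. x = f u \<and> x = f v \<and> R' u v)"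
    proof
      assume "\<exists>u\<in>K'. \<exists>v\<in>K'. x = f u \<and> x = f v \<and> R' u v"
      then obtain u v where "u \<in> K'" "v \<in> K'" "x = f u" "x = f v" "R' u v" by blast
      moreover then have "u = v" using f(2) by (metis inj_onD)
      ultimately show False using assms unfolding finite_trans_irrefl_def by blast
    qed
  qed
  then show ?thesis using transfer_sat[OF f(2)] by blast
qed

lemma main_model:
  fixes K :: "'w set" and R :: "'w \<Rightarrow> 'w \<Rightarrow> bool" and V :: "'w \<Rightarrow> 'a \<Rightarrow> bool"
    and t :: "'a afm" and q :: "nat \<Rightarrow> 'a"
  assumes RK: "\<forall>x y. R x y \<longrightarrow> x \<in> K \<and> y \<in> K"
    and tr: "transitive_on K R" and fin: "finite K"
    and inj: "inj q"
    and R'_def: "R' = (\<lambda>x y. R (fst x) (fst y) \<and> (R (fst y) (fst x) \<longrightarrow> snd y < snd x))"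
    and V'_def: "V' = (\<lambda>x p. if p \<in> range q then inv q p < snd x else V (fst x) p)"
  shows "finite_trans_irrefl (K \<times> {..N}) R'"
    and "\<And>B k i. admissible B \<Longrightarrow> atoms (erase B) \<inter> range q = {} \<Longrightarrow> k \<in> K \<Longrightarrow> i \<le> N \<Longrightarrow>
           (\<forall>m\<in>boxnums B. m + 1 < i) \<Longrightarrow>
           sat K R V k (erase B) = sat (K \<times> {..N}) R' V' (k, i) (translate q B)"
proof -
  have T: "\<And>a b c. a \<in> K \<Longrightarrow> b \<in> K \<Longrightarrow> c \<in> K \<Longrightarrow> R a b \<Longrightarrow> R b c \<Longrightarrow> R a c"
    using tr unfolding transitive_on_def by blast
  have trans: "\<And>x y z. x \<in> K \<times> {..N} \<Longrightarrow> y \<in> K \<times> {..N} \<Longrightarrow> z \<in> K \<times> {..N} \<Longrightarrow>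
      R' x y \<Longrightarrow> R' y z \<Longrightarrow> R' x z"
  proof -
    fix x y z assume xyz: "x \<in> K \<times> {..N}" "y \<in> K \<times> {..N}" "z \<in> K \<times> {..N}"
      and a0: "R' x y" and b0: "R' y z"
    have a: "R (fst x) (fst y)" "R (fst y) (fst x) \<Longrightarrow> snd y < snd x" using a0 by (auto simp: R'_def)
    have b: "R (fst y) (fst z)" "R (fst z) (fst y) \<Longrightarrow> snd z < snd y" using b0 by (auto simp: R'_def)
    have K3: "fst x \<in> K" "fst y \<in> K" "fst z \<in> K" using xyz by auto
    have c1: "R (fst x) (fst z)" using T[OF K3(1,2,3) a(1) b(1)] .
    have c2: "snd z < snd x" if c: "R (fst z) (fst x)"
    proof -
      have "R (fst y) (fst x)" using T[OF K3(2,3,1) b(1) c] .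
      moreover have "R (fst z) (fst y)" using T[OF K3(3,1,2) c a(1)] .
      ultimately show "snd z < snd x" using a(2) b(2) by fastforce
    qed
    show "R' x z" using c1 c2 by (simp add: R'_def)
  qed
  have irr: "\<And>x. \<not> R' x x" by (simp add: R'_def)
  show "finite_trans_irrefl (K \<times> {..N}) R'"
    unfolding finite_trans_irrefl_def transitive_on_def
    using fin trans irr by blast
next
  have qs: "\<And>n j l. sat (K \<times> {..N}) R' V' (j, l) (bigconj q n) = (n < l)"
  proof -
    fix n j l show "sat (K \<times> {..N}) R' V' (j, l) (bigconj q n) = (n < l)"
      by (induction n) (auto simp: V'_def inv_f_f[OF inj])
  qed
  fix B k i
  show "admissible B \<Longrightarrow> atoms (erase B) \<inter> range q = {} \<Longrightarrow> k \<in> K \<Longrightarrow> i \<le> N \<Longrightarrow>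
           (\<forall>m\<in>boxnums B. m + 1 < i) \<Longrightarrow>
           sat K R V k (erase B) = sat (K \<times> {..N}) R' V' (k, i) (translate q B)"
  proof (induction B arbitrary: k i)
    case (AAtom p)
    then show ?case by (auto simp: V'_def)
  next
    case (ABox n C)
    have nb: "n + 1 < i" using ABox.prems by simp
    have adm: "admissible C" "\<forall>m\<in>boxnums C. m < n" using ABox.prems(1) by simp_all
    have at: "atoms (erase C) \<inter> range q = {}" using ABox.prems(2) by simp
    have IH: "\<And>j l. j \<in> K \<Longrightarrow> l \<le> N \<Longrightarrow> n < l \<Longrightarrow>
       sat K R V j (erase C) = sat (K \<times> {..N}) R' V' (j, l) (translate q C)"
    proof -
      fix j l assume jl: "j \<in> K" "l \<le> N" "n < l"
      have "\<forall>m\<in>boxnums C. m + 1 < l" using adm(2) jl(3) by auto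
      then show "sat K R V j (erase C) = sat (K \<times> {..N}) R' V' (j, l) (translate q C)"
        by (rule ABox.IH[OF adm(1) at jl(1,2)])
    qed
    show ?case
    proof
      assume H: "sat K R V k (erase (ABox n C))"
      show "sat (K \<times> {..N}) R' V' (k, i) (translate q (ABox n C))"
      proof (simp only: translate.simps sat.simps, intro ballI impI)
        fix x assume x: "x \<in> K \<times> {..N}" "R' (k, i) x" "sat (K \<times> {..N}) R' V' x (bigconj q n)"
        obtain j l where jl: "x = (j, l)" by (cases x)
        have j: "j \<in> K" "l \<le> N" using x(1) jl by auto
        have Rkj: "R k j" using x(2) jl by (simp add: R'_def)
        have nl: "n < l" using x(3) jl qs by simp
        have "sat K R V j (erase C)" using H j(1) Rkj by simp
        then show "sat (K \<times> {..N}) R' V' x (translate q C)" using IH[OF j nl] jl by simp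
      qed
    next
      assume H: "sat (K \<times> {..N}) R' V' (k, i) (translate q (ABox n C))"
      show "sat K R V k (erase (ABox n C))"
      proof (simp, intro ballI impI)
        fix j assume j: "j \<in> K" "R k j"
        have "(j, n+1) \<in> K \<times> {..N}" using j nb ABox.prems by auto
        moreover have "R' (k, i) (j, n+1)" using j nb by (simp add: R'_def)
        moreover have "sat (K \<times> {..N}) R' V' (j, n+1) (bigconj q n)" using qs by simp
        moreover have H': "\<forall>x\<in>K \<times> {..N}. R' (k, i) x \<longrightarrow>
            sat (K \<times> {..N}) R' V' x (bigconj q n) \<longrightarrow> sat (K \<times> {..N}) R' V' x (translate q C)"
          using H by simp
        ultimately have "sat (K \<times> {..N}) R' V' (j, n+1) (translate q C)"
          by blast
        moreover have "n + 1 \<le> N" using nb ABox.prems(4) by simp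
        ultimately show "sat K R V j (erase C)" using IH[of j "n+1"] j(1) by simp
      qed
    qed
  next
    case (AConj B C)
    have e1: "sat K R V k (erase B) = sat (K \<times> {..N}) R' V' (k, i) (translate q B)"
      by (rule AConj.IH(1)) (use AConj.prems in auto)
    have e2: "sat K R V k (erase C) = sat (K \<times> {..N}) R' V' (k, i) (translate q C)"
      by (rule AConj.IH(2)) (use AConj.prems in auto)
    show ?case using e1 e2 by simp
  next
    case (ADisj B C)
    have e1: "sat K R V k (erase B) = sat (K \<times> {..N}) R' V' (k, i) (translate q B)"
      by (rule ADisj.IH(1)) (use ADisj.prems in auto)
    have e2: "sat K R V k (erase C) = sat (K \<times> {..N}) R' V' (k, i) (translate q C)"
      by (rule ADisj.IH(2)) (use ADisj.prems in auto)
    show ?case using e1 e2 by simp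
  next
    case (AImp B C)
    have e1: "sat K R V k (erase B) = sat (K \<times> {..N}) R' V' (k, i) (translate q B)"
      by (rule AImp.IH(1)) (use AImp.prems in auto)
    have e2: "sat K R V k (erase C) = sat (K \<times> {..N}) R' V' (k, i) (translate q C)"
      by (rule AImp.IH(2)) (use AImp.prems in auto)
    show ?case using e1 e2 by simp
  next
    case (ANeg B)
    have e1: "sat K R V k (erase B) = sat (K \<times> {..N}) R' V' (k, i) (translate q B)"
      by (rule ANeg.IH) (use ANeg.prems in auto)
    show ?case using e1 by simp
  next
    case ABot
    show ?case by simp
  qed
qed

theorem lemma4p4:
  fixes K :: "'w set" and R :: "'w \<Rightarrow> 'w \<Rightarrow> bool" and V :: "'w \<Rightarrow> 'a \<Rightarrow> bool"
    and A :: "'a fm" and t :: "'a afm" and q :: "nat \<Rightarrow> 'a"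
  assumes "kripke_tree_clusters K R"
    and "is_translation t A"
    and "inj q"
    and "\<forall>i. q i \<notin> atoms A"
  shows "\<exists>(K' :: nat set) R' (V' :: nat \<Rightarrow> 'a \<Rightarrow> bool).
           finite_trans_irrefl K' R' \<and>
           (\<forall>k\<in>K. \<exists>k'\<in>K'. sat K R V k A \<longrightarrow> sat K' R' V' k' (translate q t))"
proof -
  have RK: "\<forall>x y. R x y \<longrightarrow> x \<in> K \<and> y \<in> K"
    using assms(1) unfolding kripke_tree_clusters_def by (elim conjE)
  have tr: "transitive_on K R"
    using assms(1) unfolding kripke_tree_clusters_def by (elim conjE)
  have fin: "finite K"
    using assms(1) unfolding kripke_tree_clusters_def by (elim conjE)
  have tA: "erase t = A" "admissible t" using assms(2) by (auto simp: is_translation_def)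
  have fb: "finite (boxnums t)" by (induction t) auto
  define N where "N = Suc (Suc (Max (insert 0 (boxnums t))))"
  have Nb: "\<forall>m\<in>boxnums t. m + 1 < N" using fb by (auto simp: N_def le_imp_less_Suc)
  have at: "atoms (erase t) \<inter> range q = {}" using assms(4) tA by auto
  define R' where "R' = (\<lambda>(x::'w\<times>nat) y. R (fst x) (fst y) \<and> (R (fst y) (fst x) \<longrightarrow> snd y < snd x))"
  define V' where "V' = (\<lambda>(x::'w\<times>nat) p. if p \<in> range q then inv q p < snd x else V (fst x) p)"
  note M = main_model[OF RK tr fin assms(3) R'_def V'_def, where N=N]
  obtain K2 :: "nat set" and R2 V2 f where
    m: "finite_trans_irrefl K2 R2" "f ` (K \<times> {..N}) = K2"
       "\<forall>a\<in>K \<times> {..N}. \<forall>F. sat K2 R2 V2 (f a) F = sat (K \<times> {..N}) R' V' a F"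
    using transfer_model[OF M(1), of V'] by blast
  show ?thesis
  proof (intro exI conjI ballI)
    show "finite_trans_irrefl K2 R2" by (rule m(1))
  next
    fix k assume k: "k \<in> K"
    have kN: "(k, N) \<in> K \<times> {..N}" using k by simp
    show "\<exists>k'\<in>K2. sat K R V k A \<longrightarrow> sat K2 R2 V2 k' (translate q t)"
    proof (intro bexI impI)
      show "f (k, N) \<in> K2" using m(2) kN by blast
      assume "sat K R V k A"
      then show "sat K2 R2 V2 (f (k, N)) (translate q t)"
        using M(2)[OF tA(2) at k order_refl Nb] m(3) kN tA(1) by simp
    qed
  qed
qed

end
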